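(* Let $0\le c<\sqrt2-1$, let $K\ge1$ be an integer, let $t$ be a positive integer such that $R=(1+c)t$ is an integer with $R\ge10$, and let $L=R^{2K+1}$. For $l\in[K]$ with $cR^{K-l}$ an integer, define \[g_l=\big(1_{R^{K+1+l},R^{K-l}}\,2_{R^{K+1+l},R^{K-l}}\big)^{L/R^{K+1+l}}.\] Let $1\le i<j\le K$ with $cR^{K-i}$ and $cR^{K-j}$ integers, and let $s$ be a common subsequence of $g_i$ and $g_j$. Then \[\left(1+\frac2R\right)\operatorname{span}_{g_i}s+\operatorname{span}_{g_j}s\ \ge\ (3+c)\operatorname{len} s-\frac{10L}{R}.\]
   Context: Words are over $\{1,2\}$; $\alpha^m$ is letter $\alpha$ repeated $m$ times and $u^m$ is $m$ concatenated copies of word $u$. For positive integers $M,a$ with $ca$ and $M/((1+c)a)$ integers, $1_{M,a}=(1^a2^{ca})^{M/((1+c)a)}$ and $2_{M,a}=(2^a1^{ca})^{M/((1+c)a)}$. (The paper adopts the convention that all such lengths are integers.) Symbols are distinguishable positions; a common subsequence of $u_1,u_2$ is a pair of subsequences of $u_1,u_2$ equal as words, $\operatorname{len} s$ its length; $\operatorname{span}_{u}s$ is the length of the shortest block of consecutive symbols of $u$ containing the part of $s$ lying in $u$. *)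

theory Defs
  imports Complex_Main
begin

text \<open>Words over the alphabet {1,2} are lists of naturals.
  blk1 M a b = (1^a 2^b)^(M div (a+b)), i.e. 1_{M,a} with b = c*a;
  blk2 M a b = (2^a 1^b)^(M div (a+b)), i.e. 2_{M,a}.\<close>

definition blk1 :: "nat \<Rightarrow> nat \<Rightarrow> nat \<Rightarrow> nat list" where
  "blk1 M a b = concat (replicate (M div (a + b)) (replicate a 1 @ replicate b 2))"

definition blk2 :: "nat \<Rightarrow> nat \<Rightarrow> nat \<Rightarrow> nat list" where
  "blk2 M a b = concat (replicate (M div (a + b)) (replicate a 2 @ replicate b 1))"

text \<open>g_l = (1_{R^(K+1+l),R^(K-l)} 2_{R^(K+1+l),R^(K-l)})^(L / R^(K+1+l)), L = R^(2K+1);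
  the integer c*R^(K-l) is passed as nat (floor).\<close>

definition gword :: "real \<Rightarrow> nat \<Rightarrow> nat \<Rightarrow> nat \<Rightarrow> nat list" where
  "gword c R K l =
     (let M = R ^ (K + 1 + l); a = R ^ (K - l); b = nat \<lfloor>c * real a\<rfloor>
      in concat (replicate (R ^ (2 * K + 1) div M) (blk1 M a b @ blk2 M a b)))"

text \<open>A common subsequence of u1, u2: a pair of strictly increasing position lists
  (positions in u1, positions in u2) of equal length, reading the same word.\<close>

definition common_subseq :: "nat list \<Rightarrow> nat list \<Rightarrow> nat list \<times> nat list \<Rightarrow> bool" where
  "common_subseq u1 u2 s \<longleftrightarrow>
     (let is = fst s; js = snd s in
       sorted_wrt (<) is \<and> sorted_wrt (<) js \<and> length is = length js \<and>
       (\<forall>p\<in>set is. p < length u1) \<and> (\<forall>q\<in>set js. q < length u2) \<and>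
       map (\<lambda>p. u1 ! p) is = map (\<lambda>q. u2 ! q) js)"

definition cs_len :: "nat list \<times> nat list \<Rightarrow> nat" where
  "cs_len s = length (fst s)"

definition span_pos :: "nat list \<Rightarrow> nat" where
  "span_pos ps = (if ps = [] then 0 else last ps - hd ps + 1)"

end

theory Submission
  imports Defs
begin



definition lt :: "nat \<Rightarrow> nat \<Rightarrow> nat \<Rightarrow> nat \<Rightarrow> nat" where
 "lt M a b p = (if p mod (2*M) < M then (if p mod (a+b) < a then 1 else 2)
               else (if p mod (a+b) < a then 2 else 1))"

lemma length_concat_replicate: "length (concat (replicate n xs)) = n * length xs"
  by (induction n) auto

lemma nth_concat_replicate:
  "p < n * length xs \<Longrightarrow> concat (replicate n xs) ! p = xs ! (p mod length xs)"
proof (induction n arbitrary: p)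
  case 0 then show ?case by simp
next
  case (Suc n)
  show ?case
  proof (cases "p < length xs")
    case True then show ?thesis by (simp add: nth_append)
  next
    case False
    then have "concat (replicate (Suc n) xs) ! p = concat (replicate n xs) ! (p - length xs)"
      by (simp add: nth_append length_concat_replicate)
    also have "\<dots> = xs ! ((p - length xs) mod length xs)"
      using Suc False by (intro Suc.IH) auto
    also have "(p - length xs) mod length xs = p mod length xs"
      using False by (simp add: le_mod_geq)
    finally show ?thesis .
  qed
qed

lemma length_blk1: "(a+b) dvd M \<Longrightarrow> length (blk1 M a b) = M"
  by (simp add: blk1_def length_concat_replicate)
lemma length_blk2: "(a+b) dvd M \<Longrightarrow> length (blk2 M a b) = M"
  by (simp add: blk2_def length_concat_replicate)

lemma nth_blk1: assumes "0 < a + b" "(a+b) dvd M" "r < M"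
  shows "blk1 M a b ! r = (if r mod (a+b) < a then 1 else 2)"
proof -
  have "blk1 M a b ! r = (replicate a 1 @ replicate b 2) ! (r mod (a+b))"
    unfolding blk1_def using assms by (subst nth_concat_replicate) auto
  also have "\<dots> = (if r mod (a+b) < a then 1 else 2)"
  proof -
    have "r mod (a+b) < a+b" using assms(1) by simp
    then show ?thesis by (auto simp: nth_append)
  qed
  finally show ?thesis .
qed

lemma nth_blk2: assumes "0 < a + b" "(a+b) dvd M" "r < M"
  shows "blk2 M a b ! r = (if r mod (a+b) < a then 2 else 1)"
proof -
  have "blk2 M a b ! r = (replicate a 2 @ replicate b 1) ! (r mod (a+b))"
    unfolding blk2_def using assms by (subst nth_concat_replicate) auto
  also have "\<dots> = (if r mod (a+b) < a then 2 else 1)"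
  proof -
    have "r mod (a+b) < a+b" using assms(1) by simp
    then show ?thesis by (auto simp: nth_append)
  qed
  finally show ?thesis .
qed

lemma gw_nth: assumes "0 < a + b" "(a+b) dvd M" "p < n * (2 * M)"
  shows "concat (replicate n (blk1 M a b @ blk2 M a b)) ! p = lt M a b p"
proof -
  have len: "length (blk1 M a b @ blk2 M a b) = 2 * M"
    using assms by (simp add: length_blk1 length_blk2)
  define r where "r = p mod (2*M)"
  have M0: "M > 0" using assms by (cases "M = 0") auto
  have r: "r < 2 * M" using M0 by (simp add: r_def)
  have rm: "r mod (a+b) = p mod (a+b)"
    unfolding r_def using assms(2) by (simp add: mod_mod_cancel)
  have "concat (replicate n (blk1 M a b @ blk2 M a b)) ! p = (blk1 M a b @ blk2 M a b) ! r"
    using assms len by (subst nth_concat_replicate) (auto simp: r_def)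
  also have "\<dots> = lt M a b p"
  proof (cases "r < M")
    case True then show ?thesis
      using assms rm by (simp add: nth_append length_blk1 nth_blk1 lt_def r_def)
  next
    case False
    have "(r - M) mod (a+b) = r mod (a+b)"
    proof -
      have "r = (r - M) + M" using False by simp
      then have "r mod (a+b) = ((r - M) + M) mod (a+b)" by simp
      also have "\<dots> = (r - M) mod (a+b)" using assms(2) by (auto elim!: dvdE)
      finally show ?thesis by simp
    qed
    then show ?thesis using False assms rm r
      by (simp add: nth_append length_blk1 nth_blk2 lt_def r_def)
  qed
  finally show ?thesis .
qed




fun chg :: "('a \<Rightarrow> 'k) \<Rightarrow> 'a list \<Rightarrow> nat" where
  "chg key (x # y # xs) = (if key x = key y then 0 else 1) + chg key (y # xs)"
| "chg key _ = 0"

lemma group_bound_aux: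
  fixes pos :: "'a \<Rightarrow> nat" and wt :: "'a \<Rightarrow> real"
  assumes H: "\<And>zs. zs \<noteq> [] \<Longrightarrow> set zs \<subseteq> U \<Longrightarrow> sorted_wrt (\<lambda>a b. pos a < pos b) zs \<Longrightarrow>
      (\<forall>z\<in>set zs. key z = key (hd zs)) \<Longrightarrow>
      sum_list (map wt zs) \<le> real (pos (last zs)) - real (pos (hd zs)) + 1 + e"
  shows "xs \<noteq> [] \<Longrightarrow> sorted_wrt (\<lambda>a b. pos a < pos b) (acc @ xs) \<Longrightarrow> set (acc @ xs) \<subseteq> U \<Longrightarrow>
      (\<forall>z\<in>set acc. key z = key (hd xs)) \<Longrightarrow>
      sum_list (map wt (acc @ xs)) \<le> real (pos (last xs)) - real (pos (hd (acc @ xs))) + 1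
          + e * (1 + chg key xs)"
proof (induction xs arbitrary: acc rule: induct_list012)
  case 1 then show ?case by simp
next
  case (2 x)
  have hd1: "key (hd (acc @ [x])) = key x" using "2.prems"(4) by (cases acc) auto
  have hom: "\<forall>z\<in>set (acc@[x]). key z = key (hd (acc@[x]))"
    unfolding hd1 using "2.prems"(4) by simp
  have "sum_list (map wt (acc @ [x])) \<le> real (pos (last (acc @ [x]))) - real (pos (hd (acc @ [x]))) + 1 + e"
    by (rule H[OF _ _ _ hom]) (use "2.prems"(2,3) in simp_all)
  then show ?case by simp
next
  case (3 x y xs)
  have so: "sorted_wrt (\<lambda>a b. pos a < pos b) (acc @ x # y # xs)" using "3.prems"(2) .
  have se: "set (acc @ x # y # xs) \<subseteq> U" using "3.prems"(3) .
  have ka: "\<forall>z\<in>set acc. key z = key x" using "3.prems"(4) by simp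
  show ?case
  proof (cases "key x = key y")
    case True
    have "sum_list (map wt ((acc @ [x]) @ (y # xs))) \<le> real (pos (last (y # xs)))
       - real (pos (hd ((acc @ [x]) @ (y # xs)))) + 1 + e * (1 + chg key (y # xs))"
    proof (rule "3.IH"(2))
      show "sorted_wrt (\<lambda>a b. pos a < pos b) ((acc @ [x]) @ y # xs)" using so by simp
      show "set ((acc @ [x]) @ y # xs) \<subseteq> U" using se by simp
      show "\<forall>z\<in>set (acc @ [x]). key z = key (hd (y # xs))" using ka True by simp
    qed simp
    moreover have "chg key (x # y # xs) = chg key (y # xs)" using True by simp
    ultimately show ?thesis by simp
  next
    case False
    have hd1: "key (hd (acc @ [x])) = key x" using ka by (cases acc) auto
    have hom: "\<forall>z\<in>set (acc@[x]). key z = key (hd (acc@[x]))"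
      unfolding hd1 using ka by simp
    have so1: "sorted_wrt (\<lambda>a b. pos a < pos b) (acc @ [x])"
      using so sorted_wrt_append[of _ "acc @ [x]" "y # xs"] by simp
    have so2: "sorted_wrt (\<lambda>a b. pos a < pos b) (y # xs)"
      using so sorted_wrt_append[of _ "acc @ [x]" "y # xs"] by simp
    have xy: "pos x < pos y"
      using so sorted_wrt_append[of _ "acc @ [x]" "y # xs"] by simp
    have s1: "sum_list (map wt (acc @ [x])) \<le> real (pos (last (acc @ [x]))) - real (pos (hd (acc @ [x]))) + 1 + e"
      by (rule H[OF _ _ so1 hom]) (use se in auto)
    have s2: "sum_list (map wt ([] @ (y # xs))) \<le> real (pos (last (y # xs)))
       - real (pos (hd ([] @ (y # xs)))) + 1 + e * (1 + chg key (y # xs))"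
      by (rule "3.IH"(2)) (use so2 se in auto)
    have hh: "hd (acc @ x # y # xs) = hd (acc @ [x])" by (cases acc) auto
    have ch: "chg key (x # y # xs) = 1 + chg key (y # xs)" using False by simp
    have sm: "sum_list (map wt (acc @ x # y # xs)) = sum_list (map wt (acc @ [x])) + sum_list (map wt (y # xs))"
      by simp
    have "real (pos x) + 1 \<le> real (pos y)" using xy by simp
    moreover have "last (x # y # xs) = last (y # xs)" by simp
    moreover have "e * real (1 + (1 + chg key (y # xs))) = e + e * real (1 + chg key (y # xs))"
      by (simp add: distrib_left)
    moreover have "last (acc @ [x]) = x" by simp
    ultimately show ?thesis unfolding sm hh ch using s1 s2 by (simp only: append_Nil list.sel(1))
  qed
qed

lemma group_bound:
  fixes pos :: "'a \<Rightarrow> nat" and wt :: "'a \<Rightarrow> real"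
  assumes "xs \<noteq> []" "sorted_wrt (\<lambda>a b. pos a < pos b) xs"
  and H: "\<And>zs. zs \<noteq> [] \<Longrightarrow> set zs \<subseteq> set xs \<Longrightarrow> sorted_wrt (\<lambda>a b. pos a < pos b) zs \<Longrightarrow>
      (\<forall>z\<in>set zs. key z = key (hd zs)) \<Longrightarrow>
      sum_list (map wt zs) \<le> real (pos (last zs)) - real (pos (hd zs)) + 1 + e"
  shows "sum_list (map wt xs) \<le> real (pos (last xs)) - real (pos (hd xs)) + 1 + e * (1 + chg key xs)"
proof -
  note G = group_bound_aux[where U="set xs" and pos=pos and key=key and wt=wt and e=e and xs=xs and acc="[]"]
  have p1: "sorted_wrt (\<lambda>a b. pos a < pos b) ([] @ xs)" using assms(2) by simp
  have p2: "set ([] @ xs) \<subseteq> set xs" by simp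
  have p3: "\<forall>z\<in>set []. key z = key (hd xs)" by simp
  have "sum_list (map wt ([] @ xs)) \<le> real (pos (last xs)) - real (pos (hd ([] @ xs))) + 1 + e * (1 + chg key xs)"
    by (rule G[OF H assms(1) p1 p2 p3])
  then show ?thesis by simp
qed

lemma chg_le:
  fixes F :: "'a \<Rightarrow> nat"
  assumes "sorted_wrt (\<lambda>a b. F a \<le> F b \<and> (key a \<noteq> key b \<longrightarrow> F a < F b)) xs" "xs \<noteq> []"
  shows "chg key xs + F (hd xs) \<le> F (last xs)"
  using assms
proof (induction xs rule: induct_list012)
  case 1 then show ?case by simp
next
  case (2 x) then show ?case by simp
next
  case (3 x y xs)
  have sw: "sorted_wrt (\<lambda>a b. F a \<le> F b \<and> (key a \<noteq> key b \<longrightarrow> F a < F b)) (x # y # xs)"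
    using "3.prems"(1) .
  have sw2: "sorted_wrt (\<lambda>a b. F a \<le> F b \<and> (key a \<noteq> key b \<longrightarrow> F a < F b)) (y # xs)"
    using sw by (simp only: sorted_wrt.simps(2)) blast
  have ih: "chg key (y # xs) + F (hd (y # xs)) \<le> F (last (y # xs))"
    by (rule "3.IH"(2)[OF sw2]) simp
  have all: "\<forall>b\<in>set (y # xs). F x \<le> F b \<and> (key x \<noteq> key b \<longrightarrow> F x < F b)"
    using sw by (simp only: sorted_wrt.simps(2)) blast
  have xy: "F x \<le> F y \<and> (key x \<noteq> key y \<longrightarrow> F x < F y)"
    by (rule bspec[OF all]) simp
  show ?case
  proof (cases "key x = key y")
    case True
    then show ?thesis using ih xy by simp
  next
    case False
    then show ?thesis using ih xy by simp
  qed
qed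

lemma mod_eq_close: fixes x y m :: nat
  assumes "x mod m = y mod m" "x \<le> y" "y < x + m" shows "x = y"
proof (rule ccontr)
  assume "x \<noteq> y"
  have "m dvd y - x" using assms mod_eq_dvd_iff_nat[of x y m] by simp
  moreover have "0 < y - x" "y - x < m" using assms \<open>x \<noteq> y\<close> by auto
  ultimately show False using dvd_imp_le[of m "y - x"] by simp
qed

lemma card_interval_mod:
  fixes m k :: nat
  assumes m: "0 < m" and A: "A \<subseteq> {..<m}" "card A = k"
  shows "m * card {q\<in>{u..<u+l}. q mod m \<in> A} \<le> k * (l + m - k)"
proof (induction l rule: less_induct)
  case (less l)
  have kle: "k \<le> m" using card_mono[OF finite_lessThan A(1)] A(2) by simp
  have small: "card {q\<in>{u..<u+l'}. q mod m \<in> A} \<le> k" if "l' \<le> m" for l' u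
  proof -
    have "inj_on (\<lambda>q. q mod m) {q\<in>{u..<u+l'}. q mod m \<in> A}"
    proof (rule inj_onI)
      fix x y assume xy: "x \<in> {q\<in>{u..<u+l'}. q mod m \<in> A}" "y \<in> {q\<in>{u..<u+l'}. q mod m \<in> A}"
        "x mod m = y mod m"
      moreover have "x < y + m" "y < x + m" using xy that by auto
      ultimately show "x = y" using mod_eq_close[of x m y] mod_eq_close[of y m x]
        by (cases "x \<le> y") auto
    qed
    then have "card {q\<in>{u..<u+l'}. q mod m \<in> A} = card ((\<lambda>q. q mod m) ` {q\<in>{u..<u+l'}. q mod m \<in> A})"
      by (simp add: card_image)
    also have "\<dots> \<le> card A"
      using A by (intro card_mono) (auto intro: finite_subset)
    finally show ?thesis using A by simp
  qed
  show ?case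
  proof (cases "l \<le> m")
    case True
    have c1: "card {q\<in>{u..<u+l}. q mod m \<in> A} \<le> l"
      by (rule order_trans[OF card_mono[of "{u..<u+l}"]]) auto
    have c2: "card {q\<in>{u..<u+l}. q mod m \<in> A} \<le> k" using small True by simp
    show ?thesis
    proof (cases "l \<le> k")
      case True
      have "m * card {q\<in>{u..<u+l}. q mod m \<in> A} \<le> m * l" using c1 by simp
      also have "\<dots> = k * l + (m - k) * l" using kle by (simp add: algebra_simps)
      also have "\<dots> \<le> k * l + (m - k) * k" using True by simp
      also have "\<dots> = k * (l + m - k)" using kle by (simp add: algebra_simps)
      finally show ?thesis .
    next
      case False
      have "m * card {q\<in>{u..<u+l}. q mod m \<in> A} \<le> m * k" using c2 by simp
      also have "\<dots> \<le> k * (l + m - k)"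
      proof -
        have "k \<le> l" using False by simp
        then have "m \<le> l + m - k" by simp
        then show ?thesis by (simp add: mult.commute)
      qed
      finally show ?thesis .
    qed
  next
    case False
    define l' where "l' = l - m"
    have l: "l = l' + m" using False by (simp add: l'_def)
    have split: "{q\<in>{u..<u+l}. q mod m \<in> A} = {q\<in>{u..<u+l'}. q mod m \<in> A} \<union> {q\<in>{u+l'..<(u+l')+m}. q mod m \<in> A}"
      using l by auto
    have "card {q\<in>{u..<u+l}. q mod m \<in> A} \<le> card {q\<in>{u..<u+l'}. q mod m \<in> A} + card {q\<in>{u+l'..<(u+l')+m}. q mod m \<in> A}"
      unfolding split by (rule card_Un_le)
    also have "\<dots> \<le> card {q\<in>{u..<u+l'}. q mod m \<in> A} + k" using small[of m] by simp
    finally have "m * card {q\<in>{u..<u+l}. q mod m \<in> A} \<le> m * card {q\<in>{u..<u+l'}. q mod m \<in> A} + m * k"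
      by (metis add_mult_distrib2 mult_le_mono2)
    also have "\<dots> \<le> k * (l' + m - k) + m * k" using less.IH[of l'] l m by simp
    also have "\<dots> = k * (l + m - k)"
    proof -
      have "l + m - k = (l' + m - k) + m" using l kle by simp
      then show ?thesis by (simp add: distrib_left mult.commute)
    qed
    finally show ?thesis .
  qed
qed




lemma par: assumes "0 < (M::nat)" shows "(p mod (2*M) < M) = even (p div M)"
proof -
  have "p mod (M*2) = M * (p div M mod 2) + p mod M" by (rule mod_mult2_eq)
  moreover have "p mod M < M" using assms by simp
  ultimately show ?thesis
  proof (cases "even (p div M)")
    case True
    then have "p div M mod 2 = 0" by presburger
    then show ?thesis using \<open>p mod (M*2) = _\<close> \<open>p mod M < M\<close> True by (simp add: mult.commute)
  next
    case False
    then have "p div M mod 2 = 1" by presburger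
    then show ?thesis using \<open>p mod (M*2) = _\<close> False by (simp add: mult.commute)
  qed
qed

lemma lt_shift: assumes "0 < M" "(a+b) dvd M"
  shows "lt M a b (p + M) \<noteq> lt M a b p"
proof -
  have m: "(p + M) mod (a+b) = p mod (a+b)" using assms(2) by (auto elim!: dvdE)
  have "(p + M) div M = Suc (p div M)" using assms(1) by simp
  then have "(p + M) mod (2*M) < M \<longleftrightarrow> \<not> (p mod (2*M) < M)"
    using par[OF assms(1)] by simp
  then show ?thesis unfolding lt_def m by auto
qed

lemma window_I:
  assumes "0 < M" "(a+b) dvd M" "S \<subseteq> {u..v}" "\<forall>p\<in>S. lt M a b p = x"
  shows "2 * card S \<le> Suc v - u + M"
proof -
  have fin: "finite S" using assms(3) finite_subset by blast
  have disj: "S \<inter> (\<lambda>p. p + M) ` S = {}"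
  proof -
    { fix p assume p: "p \<in> S" "p \<in> (\<lambda>p. p + M) ` S"
      then obtain p' where p': "p' \<in> S" "p = p' + M" by auto
      have "lt M a b p = x" using p(1) assms(4) by simp
      moreover have "lt M a b p' = x" using p'(1) assms(4) by simp
      ultimately have False using lt_shift[OF assms(1,2), of p'] p'(2) by simp }
    then show ?thesis by blast
  qed
  have sub: "S \<union> (\<lambda>p. p + M) ` S \<subseteq> {u..v+M}" using assms(3) by auto
  have "2 * card S = card S + card ((\<lambda>p. p + M) ` S)" by (simp add: card_image)
  also have "\<dots> = card (S \<union> (\<lambda>p. p + M) ` S)" using fin disj by (simp add: card_Un_disjoint)
  also have "\<dots> \<le> card {u..v+M}" using sub by (intro card_mono) auto
  also have "\<dots> \<le> Suc v - u + M" by simp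
  finally show ?thesis .
qed

lemma window_J1:
  fixes a b :: nat
  assumes "0 < a + b" "T \<subseteq> {u..v}" "\<forall>q\<in>T. q mod (a+b) < a"
  shows "(a+b) * card T \<le> a * ((Suc v - u) + b)"
proof -
  have "T \<subseteq> {q\<in>{u..<u+(Suc v - u)}. q mod (a+b) \<in> {..<a}}" using assms by auto
  moreover have "finite {q\<in>{u..<u+(Suc v - u)}. q mod (a+b) \<in> {..<a}}" by simp
  ultimately have "card T \<le> card {q\<in>{u..<u+(Suc v - u)}. q mod (a+b) \<in> {..<a}}"
    using card_mono by blast
  then have "(a+b) * card T \<le> (a+b) * card {q\<in>{u..<u+(Suc v - u)}. q mod (a+b) \<in> {..<a}}"
    by simp
  also have "\<dots> \<le> a * ((Suc v - u) + (a+b) - a)"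
    using assms by (intro card_interval_mod) auto
  finally show ?thesis by simp
qed

lemma window_J2:
  fixes a b :: nat
  assumes "0 < a + b" "T \<subseteq> {u..v}" "\<forall>q\<in>T. \<not> q mod (a+b) < a"
  shows "(a+b) * card T \<le> b * ((Suc v - u) + a)"
proof -
  have "T \<subseteq> {q\<in>{u..<u+(Suc v - u)}. q mod (a+b) \<in> {a..<a+b}}" using assms by auto
  moreover have "finite {q\<in>{u..<u+(Suc v - u)}. q mod (a+b) \<in> {a..<a+b}}" by simp
  ultimately have "card T \<le> card {q\<in>{u..<u+(Suc v - u)}. q mod (a+b) \<in> {a..<a+b}}"
    using card_mono by blast
  then have "(a+b) * card T \<le> (a+b) * card {q\<in>{u..<u+(Suc v - u)}. q mod (a+b) \<in> {a..<a+b}}"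
    by (rule mult_le_mono2)
  also have "\<dots> \<le> b * ((Suc v - u) + (a+b) - b)"
    using assms by (intro card_interval_mod) auto
  finally show ?thesis by simp
qed

definition run :: "nat \<Rightarrow> nat \<Rightarrow> nat \<Rightarrow> nat" where
  "run m a p = 2 * (p div m) + (if p mod m < a then 0 else 1)"

lemma run_mono: assumes "0 < m" "p \<le> p'" shows "run m a p \<le> run m a p'"
proof (cases "p div m = p' div m")
  case True
  have "p div m * m = p' div m * m" using True by simp
  then have "p mod m \<le> p' mod m"
    using assms div_mult_mod_eq[of p m] div_mult_mod_eq[of p' m] by linarith
  then show ?thesis using True by (auto simp: run_def)
next
  case False
  then have "p div m < p' div m" using div_le_mono[OF assms(2), of m] by simp
  then show ?thesis by (auto simp: run_def)
qed

lemma run_eq: assumes "0 < a + b" "(a+b) dvd M" "0 < M" "run (a+b) a p = run (a+b) a p'"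
  shows "lt M a b p = lt M a b p'"
proof -
  have d1: "run (a+b) a p div 2 = p div (a+b)" "run (a+b) a p' div 2 = p' div (a+b)"
    unfolding run_def by simp_all
  have h1: "(run (a+b) a p mod 2 = 0) = (p mod (a+b) < a)" "(run (a+b) a p' mod 2 = 0) = (p' mod (a+b) < a)"
    unfolding run_def by simp_all
  have d: "p div (a+b) = p' div (a+b)" using d1 assms(4) by metis
  have h: "(p mod (a+b) < a) = (p' mod (a+b) < a)" using h1 assms(4) by metis
  obtain k where k: "M = (a+b) * k" using assms(2) by auto
  have "p div M = p' div M" unfolding k div_mult2_eq d ..
  then have "(p mod (2*M) < M) = (p' mod (2*M) < M)" using par[OF assms(3)] by simp
  then show ?thesis unfolding lt_def using h by simp
qed

lemma run_bound: assumes "0 < m" "p < n * m" shows "run m a p + 1 \<le> 2 * n"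
proof -
  have "p div m < n" using assms by (simp add: div_less_iff_less_mult)
  then show ?thesis by (auto simp: run_def)
qed




lemma sorted_hd_le:
  fixes pos :: "'a \<Rightarrow> nat"
  shows "sorted_wrt (\<lambda>a b. pos a < pos b) zs \<Longrightarrow> z \<in> set zs \<Longrightarrow> pos (hd zs) \<le> pos z"
  by (cases zs) auto

lemma sorted_le_last:
  fixes pos :: "'a \<Rightarrow> nat"
  shows "sorted_wrt (\<lambda>a b. pos a < pos b) zs \<Longrightarrow> z \<in> set zs \<Longrightarrow> pos z \<le> pos (last zs)"
proof (induction zs)
  case Nil then show ?case by simp
next
  case (Cons x zs)
  show ?case
  proof (cases "zs = []")
    case True then show ?thesis using Cons.prems by simp
  next
    case False
    have l: "last zs \<in> set zs" using False by simp
    have "pos x < pos (last zs)" using Cons.prems(1) l by simp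
    moreover have "z = x \<or> z \<in> set zs" using Cons.prems(2) by simp
    moreover have "sorted_wrt (\<lambda>a b. pos a < pos b) zs" using Cons.prems(1) by simp
    ultimately show ?thesis using Cons.IH False by auto
  qed
qed

lemma sorted_card:
  fixes pos :: "'a \<Rightarrow> nat"
  assumes "sorted_wrt (\<lambda>a b. pos a < pos b) zs"
  shows "card (pos ` set zs) = length zs"
proof -
  have "sorted_wrt (<) (map pos zs)" using assms by (simp add: sorted_wrt_map)
  then have "distinct (map pos zs)" by (simp add: strict_sorted_iff)
  then show ?thesis using distinct_card[of "map pos zs"] by simp
qed

lemma sum_if2: "sum_list (map (\<lambda>z. if P z then (2::real) else 0) zs) = 2 * real (length (filter P zs))"
  by (induction zs) auto

lemma sum_const_list: "(\<forall>z\<in>set zs. f z = w) \<Longrightarrow> sum_list (map f zs) = real (length zs) * (w::real)"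
  by (induction zs) (auto simp: algebra_simps)


lemma main_comb:
  fixes c :: real and "is" js :: "nat list" and aI bI MI aJ bJ MJ L R :: nat
  assumes c0: "0 \<le> c" and cc: "c * (3 + c) \<le> 1 + c" and c1: "c \<le> 1"
    and bI: "real bI = c * real aI" and bJ: "real bJ = c * real aJ"
    and aI0: "0 < aI" and aJ0: "0 < aJ" and MI0: "0 < MI" and MJ0: "0 < MJ"
    and dI: "(aI + bI) dvd MI" and dJ: "(aJ + bJ) dvd MJ"
    and LI: "MI dvd L" and LJ: "MJ dvd L"
    and sI: "sorted_wrt (<) is" and sJ: "sorted_wrt (<) js" and len: "length is = length js"
    and ne: "is \<noteq> []"
    and bI2: "\<forall>p\<in>set is. p < 2 * L" and bJ2: "\<forall>q\<in>set js. q < 2 * L"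
    and eq: "\<forall>k < length is. lt MI aI bI (is ! k) = lt MJ aJ bJ (js ! k)"
    and R1: "R * aJ \<le> aI" and R2: "R * aJ \<le> MJ" and R3: "R * MI \<le> MJ" and R0: "0 < R"
  shows "(3 + c) * real (length is) \<le> (real (last is) - real (hd is) + 1)
            + (real (last js) - real (hd js) + 1) + 8 * real L / real R"
proof -
  define xs where "xs = zip is js"
  have neJ: "js \<noteq> []" using ne len by auto
  have xsne: "xs \<noteq> []" using ne neJ by (simp add: xs_def)
  have lenx: "length xs = length is" using len by (simp add: xs_def)
  have hdx: "hd xs = (hd is, hd js)" using ne neJ by (simp add: xs_def hd_zip)
  have lastx: "last xs = (last is, last js)" using ne neJ len by (simp add: xs_def last_zip)
  have elem: "fst z < 2*L \<and> snd z < 2*L \<and> lt MI aI bI (fst z) = lt MJ aJ bJ (snd z)"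
    if zin: "z \<in> set xs" for z
  proof -
    obtain k where k: "is ! k = fst z" "js ! k = snd z" "k < length is" "k < length js"
      using zin unfolding xs_def in_set_zip by blast
    have "is ! k \<in> set is" using k(3) by (rule nth_mem)
    moreover have "js ! k \<in> set js" using k(4) by (rule nth_mem)
    ultimately show ?thesis using k bI2 bJ2 eq by auto
  qed
  have sx: "sorted_wrt (\<lambda>a b. fst a < fst b \<and> snd a < snd b) xs"
    unfolding sorted_wrt_iff_nth_less
  proof (intro allI impI)
    fix i' j' assume "i' < j'" "j' < length xs"
    then show "fst (xs ! i') < fst (xs ! j') \<and> snd (xs ! i') < snd (xs ! j')"
      using sI sJ len unfolding sorted_wrt_iff_nth_less xs_def by auto
  qed
  have sx1: "sorted_wrt (\<lambda>a b. fst a < fst b) xs" by (rule sorted_wrt_mono_rel[OF _ sx]) auto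
  have sx2: "sorted_wrt (\<lambda>a b. snd a < snd b) xs" by (rule sorted_wrt_mono_rel[OF _ sx]) auto
  define mj where "mj z = (snd z mod (aJ + bJ) < aJ)" for z :: "nat \<times> nat"
  define wJ where "wJ z = (if mj z then 1 + c else 3 + c)" for z :: "nat \<times> nat"
  define wI where "wI z = (if mj z then 2 else (0::real))" for z :: "nat \<times> nat"
  have mJ0: "0 < aJ + bJ" using aJ0 by simp
  have mI0: "0 < aI + bI" using aI0 by simp
  have bJle: "real bJ \<le> real aJ"
  proof -
    have "c * real aJ \<le> 1 * real aJ" using c1 by (intro mult_right_mono) simp_all
    then show ?thesis using bJ by simp
  qed
  have GJ: "sum_list (map wJ xs) \<le> real (snd (last xs)) - real (snd (hd xs)) + 1 + real aJ * real (1 + chg mj xs)"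
  proof (rule group_bound[OF xsne sx2])
    fix zs assume zne: "zs \<noteq> []" and zsub: "set zs \<subseteq> set xs"
      and zs: "sorted_wrt (\<lambda>a b. snd a < snd b) zs" and hom: "\<forall>z\<in>set zs. mj z = mj (hd zs)"
    define u where "u = snd (hd zs)"
    define v where "v = snd (last zs)"
    define T where "T = snd ` set zs"
    have Tsub: "T \<subseteq> {u..v}"
      using sorted_hd_le[OF zs] sorted_le_last[OF zs] by (auto simp: T_def u_def v_def)
    have cT: "card T = length zs" unfolding T_def by (rule sorted_card[OF zs])
    have uv: "u \<le> v" using sorted_le_last[OF zs, of "hd zs"] zne by (simp add: u_def v_def)
    have lreal: "real (Suc v - u) = real v - real u + 1" using uv by (simp add: of_nat_diff)
    show "sum_list (map wJ zs) \<le> real (snd (last zs)) - real (snd (hd zs)) + 1 + real aJ"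
    proof (cases "mj (hd zs)")
      case True
      have all: "\<forall>q\<in>T. q mod (aJ+bJ) < aJ" using hom True by (auto simp: T_def mj_def)
      have w: "(aJ + bJ) * card T \<le> aJ * ((Suc v - u) + bJ)" by (rule window_J1[OF mJ0 Tsub all])
      have sum: "sum_list (map wJ zs) = real (length zs) * (1 + c)"
        by (rule sum_const_list) (use hom True in \<open>auto simp: wJ_def\<close>)
      have "real ((aJ + bJ) * card T) \<le> real (aJ * ((Suc v - u) + bJ))"
        using w by (simp only: of_nat_le_iff)
      then have "(real aJ + c * real aJ) * real (length zs) \<le> real aJ * (real v - real u + 1 + c * real aJ)"
        using bJ cT lreal by (simp only: of_nat_mult of_nat_add)
      then have "real aJ * ((1 + c) * real (length zs)) \<le> real aJ * (real v - real u + 1 + c * real aJ)"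
        by (simp add: algebra_simps)
      then have "(1 + c) * real (length zs) \<le> real v - real u + 1 + c * real aJ"
        using aJ0 by (simp add: mult_le_cancel_left_pos)
      then show ?thesis using sum bJle bJ unfolding u_def v_def by (simp add: algebra_simps)
    next
      case False
      have all: "\<forall>q\<in>T. \<not> q mod (aJ+bJ) < aJ" using hom False by (auto simp: T_def mj_def)
      have w: "(aJ + bJ) * card T \<le> bJ * ((Suc v - u) + aJ)" by (rule window_J2[OF mJ0 Tsub all])
      have sum: "sum_list (map wJ zs) = real (length zs) * (3 + c)"
        by (rule sum_const_list) (use hom False in \<open>auto simp: wJ_def\<close>)
      have "real ((aJ + bJ) * card T) \<le> real (bJ * ((Suc v - u) + aJ))"
        using w by (simp only: of_nat_le_iff)
      then have "(real aJ + c * real aJ) * real (length zs) \<le> c * real aJ * (real v - real u + 1 + real aJ)"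
        using bJ cT lreal by (simp only: of_nat_mult of_nat_add)
      then have "real aJ * ((1 + c) * real (length zs)) \<le> real aJ * (c * (real v - real u + 1 + real aJ))"
        by (simp add: algebra_simps)
      then have k: "(1 + c) * real (length zs) \<le> c * (real v - real u + 1 + real aJ)"
        using aJ0 by (simp add: mult_le_cancel_left_pos)
      have "(3 + c) * real (length zs) \<le> real v - real u + 1 + real aJ"
      proof (cases "c = 0")
        case True
        then have "real (length zs) \<le> 0" using k by simp
        then show ?thesis using True uv by simp
      next
        case False
        then have cp: "0 < c" using c0 by simp
        have "c * ((3 + c) * real (length zs)) \<le> (1 + c) * real (length zs)"
          using cc by (simp add: mult.assoc[symmetric] mult_right_mono)
        also have "\<dots> \<le> c * (real v - real u + 1 + real aJ)" by (rule k)
        finally show ?thesis using cp by (simp add: mult_le_cancel_left_pos)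
      qed
      then show ?thesis using sum unfolding u_def v_def by (simp add: algebra_simps)
    qed
  qed
  define NI where "NI = 2 * L div (aI + bI)"
  define NJ where "NJ = 2 * L div MJ"
  have dI2: "(aI+bI) dvd 2*L" using dI LI by (meson dvd_mult dvd_trans)
  have dJ2: "MJ dvd 2*L" using LJ by (simp add: dvd_mult)
  have NIe: "NI * (aI+bI) = 2*L" using dI2 by (simp add: NI_def)
  have NJe: "NJ * MJ = 2*L" using dJ2 by (simp add: NJ_def)
  have lastin: "last xs \<in> set xs" using xsne by simp
  define F where "F z = run (aI+bI) aI (fst z) + snd z div MJ" for z :: "nat \<times> nat"
  have sF: "sorted_wrt (\<lambda>a b. F a \<le> F b \<and> (mj a \<noteq> mj b \<longrightarrow> F a < F b)) xs"
  proof (rule sorted_wrt_mono_rel[OF _ sx])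
    fix a b assume a: "a \<in> set xs" and b: "b \<in> set xs" and ab: "fst a < fst b \<and> snd a < snd b"
    have r1: "run (aI+bI) aI (fst a) \<le> run (aI+bI) aI (fst b)" using run_mono[OF mI0] ab by simp
    have r2: "snd a div MJ \<le> snd b div MJ" using ab by (simp add: div_le_mono)
    have "mj a = mj b" if "F a = F b"
    proof -
      have e1: "run (aI+bI) aI (fst a) = run (aI+bI) aI (fst b)" and e2: "snd a div MJ = snd b div MJ"
        using that r1 r2 unfolding F_def by linarith+
      have "lt MI aI bI (fst a) = lt MI aI bI (fst b)" by (rule run_eq[OF mI0 dI MI0 e1])
      then have l: "lt MJ aJ bJ (snd a) = lt MJ aJ bJ (snd b)" using elem[OF a] elem[OF b] by simp
      have p: "(snd a mod (2*MJ) < MJ) = (snd b mod (2*MJ) < MJ)" using par[OF MJ0] e2 by simp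
      show ?thesis using l p unfolding lt_def mj_def by (auto split: if_splits)
    qed
    then show "F a \<le> F b \<and> (mj a \<noteq> mj b \<longrightarrow> F a < F b)" using r1 r2 unfolding F_def by fastforce
  qed
  have chJ: "chg mj xs + F (hd xs) \<le> F (last xs)" by (rule chg_le[OF sF xsne])
  have FL: "F (last xs) + 2 \<le> 2 * NI + NJ"
  proof -
    have p: "fst (last xs) < NI * (aI+bI)" using elem[OF lastin] NIe by simp
    have "run (aI+bI) aI (fst (last xs)) + 1 \<le> 2 * NI" by (rule run_bound[OF mI0 p])
    moreover have "snd (last xs) div MJ < NJ"
      using elem[OF lastin] NJe MJ0 by (simp add: div_less_iff_less_mult)
    ultimately show ?thesis unfolding F_def by linarith
  qed
  have chJ2: "1 + chg mj xs \<le> 2 * NI + NJ" using chJ FL by linarith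
  have errJ: "R * (aJ * (1 + chg mj xs)) \<le> 6 * L"
  proof -
    have "R * (aJ * (1 + chg mj xs)) \<le> R * (aJ * (2*NI + NJ))" using chJ2 by (intro mult_le_mono2)
    also have "\<dots> = 2 * (NI * (R * aJ)) + NJ * (R * aJ)" by (simp add: algebra_simps)
    also have "\<dots> \<le> 2 * (NI * (aI+bI)) + NJ * MJ"
      using R1 R2 by (intro add_mono mult_le_mono) auto
    also have "\<dots> = 6 * L" using NIe NJe by simp
    finally show ?thesis .
  qed
  define rho where "rho z = snd z div MJ" for z :: "nat \<times> nat"
  have GI: "sum_list (map wI xs) \<le> real (fst (last xs)) - real (fst (hd xs)) + 1 + real MI * real (1 + chg rho xs)"
  proof (rule group_bound[OF xsne sx1])
    fix zs assume zne: "zs \<noteq> []" and zsub: "set zs \<subseteq> set xs"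
      and zs: "sorted_wrt (\<lambda>a b. fst a < fst b) zs" and hom: "\<forall>z\<in>set zs. rho z = rho (hd zs)"
    define u where "u = fst (hd zs)"
    define v where "v = fst (last zs)"
    define S where "S = fst ` set (filter mj zs)"
    have zs': "sorted_wrt (\<lambda>a b. fst a < fst b) (filter mj zs)" using zs by (rule sorted_wrt_filter)
    have cS: "card S = length (filter mj zs)" unfolding S_def by (rule sorted_card[OF zs'])
    have Ssub: "S \<subseteq> {u..v}"
      using sorted_hd_le[OF zs] sorted_le_last[OF zs] by (auto simp: S_def u_def v_def)
    have uv: "u \<le> v" using sorted_le_last[OF zs, of "hd zs"] zne by (simp add: u_def v_def)
    define x where "x = (if snd (hd zs) mod (2*MJ) < MJ then 1 else (2::nat))"
    have all: "\<forall>p\<in>S. lt MI aI bI p = x"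
    proof
      fix p assume "p \<in> S"
      then obtain z where z: "z \<in> set zs" "mj z" "p = fst z" by (auto simp: S_def)
      have "lt MI aI bI p = lt MJ aJ bJ (snd z)" using elem z zsub by auto
      moreover have "(snd z mod (2*MJ) < MJ) = (snd (hd zs) mod (2*MJ) < MJ)"
        using par[OF MJ0] hom z by (simp add: rho_def)
      ultimately show "lt MI aI bI p = x" using z(2) unfolding x_def lt_def mj_def by auto
    qed
    have w: "2 * card S \<le> Suc v - u + MI" by (rule window_I[OF MI0 dI Ssub all])
    have sum: "sum_list (map wI zs) = 2 * real (length (filter mj zs))"
      unfolding wI_def by (rule sum_if2)
    have "real (2 * card S) \<le> real (Suc v - u + MI)" using w by (simp only: of_nat_le_iff)
    then show "sum_list (map wI zs) \<le> real (fst (last zs)) - real (fst (hd zs)) + 1 + real MI"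
      using sum cS uv unfolding u_def v_def by (simp add: of_nat_diff)
  qed
  have srho: "sorted_wrt (\<lambda>a b. rho a \<le> rho b \<and> (rho a \<noteq> rho b \<longrightarrow> rho a < rho b)) xs"
  proof (rule sorted_wrt_mono_rel[OF _ sx])
    fix a b :: "nat \<times> nat" assume "fst a < fst b \<and> snd a < snd b"
    then have "rho a \<le> rho b" unfolding rho_def by (simp add: div_le_mono)
    then show "rho a \<le> rho b \<and> (rho a \<noteq> rho b \<longrightarrow> rho a < rho b)" by simp
  qed
  have chI: "chg rho xs + rho (hd xs) \<le> rho (last xs)" by (rule chg_le[OF srho xsne])
  have "rho (last xs) < NJ" using elem[OF lastin] NJe MJ0 by (simp add: rho_def div_less_iff_less_mult)
  then have chI2: "1 + chg rho xs \<le> NJ" using chI by linarith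
  have errI: "R * (MI * (1 + chg rho xs)) \<le> 2 * L"
  proof -
    have "R * (MI * (1 + chg rho xs)) \<le> R * (MI * NJ)" using chI2 by (intro mult_le_mono2)
    also have "\<dots> = NJ * (R * MI)" by (simp add: algebra_simps)
    also have "\<dots> \<le> NJ * MJ" using R3 by simp
    finally show ?thesis using NJe by simp
  qed
  have tot: "sum_list (map wI xs) + sum_list (map wJ xs) = (3 + c) * real (length xs)"
  proof -
    have "sum_list (map wI xs) + sum_list (map wJ xs) = sum_list (map (\<lambda>z. wI z + wJ z) xs)"
      by (simp add: sum_list_addf)
    also have "\<dots> = real (length xs) * (3 + c)"
      by (rule sum_const_list) (auto simp: wI_def wJ_def)
    finally show ?thesis by simp
  qed
  have Rp: "0 < real R" using R0 by simp
  have eI: "real MI * real (1 + chg rho xs) \<le> 2 * real L / real R"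
  proof -
    have "real R * (real MI * real (1 + chg rho xs)) \<le> 2 * real L"
      using errI by (metis of_nat_le_iff of_nat_mult of_nat_numeral)
    then show ?thesis using Rp by (simp add: pos_le_divide_eq mult.commute)
  qed
  have eJ: "real aJ * real (1 + chg mj xs) \<le> 6 * real L / real R"
  proof -
    have "real R * (real aJ * real (1 + chg mj xs)) \<le> 6 * real L"
      using errJ by (metis of_nat_le_iff of_nat_mult of_nat_numeral)
    then show ?thesis using Rp by (simp add: pos_le_divide_eq mult.commute)
  qed
  have "(3 + c) * real (length is) \<le> (real (last is) - real (hd is) + 1 + 2 * real L / real R)
        + (real (last js) - real (hd js) + 1 + 6 * real L / real R)"
    using GI GJ tot eI eJ lenx hdx lastx by simp
  then show ?thesis by (simp add: field_simps)
qed




lemma gword_facts: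
  fixes c :: real and R K t l :: nat
  assumes c0: "0 \<le> c" and Rt: "real R = (1 + c) * real t" and t0: "0 < t" and lK: "l \<le> K"
    and cint: "c * real (R ^ (K - l)) \<in> \<int>"
  shows "real (nat \<lfloor>c * real (R ^ (K - l))\<rfloor>) = c * real (R ^ (K - l))"
    and "(R^(K-l) + nat \<lfloor>c * real (R ^ (K - l))\<rfloor>) dvd R^(K+1+l)"
    and "R^(K+1+l) dvd R^(2*K+1)"
    and "0 < R"
    and "gword c R K l = concat (replicate (R^(2*K+1) div R^(K+1+l))
           (blk1 (R^(K+1+l)) (R^(K-l)) (nat \<lfloor>c * real (R ^ (K - l))\<rfloor>)
          @ blk2 (R^(K+1+l)) (R^(K-l)) (nat \<lfloor>c * real (R ^ (K - l))\<rfloor>)))"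
proof -
  define a where "a = R^(K-l)"
  obtain z where z: "c * real a = of_int z" using cint unfolding a_def by (auto elim!: Ints_cases)
  have "0 \<le> c * real a" using c0 by simp
  then have z0: "0 \<le> z" using z by simp
  show b: "real (nat \<lfloor>c * real (R ^ (K - l))\<rfloor>) = c * real (R ^ (K - l))"
    using z z0 unfolding a_def by simp
  have "real t \<le> real R" using Rt c0 by (simp add: algebra_simps)
  then show R0: "0 < R" using t0 by simp
  define b' where "b' = nat \<lfloor>c * real (R ^ (K - l))\<rfloor>"
  have e: "K+1+l = (K-l) + 2*l + 1" using lK by simp
  have "real (R^(K+1+l)) = real a * real R ^ (2*l) * real R" unfolding e a_def by (simp add: power_add)
  also have "\<dots> = real a * real R ^ (2*l) * ((1 + c) * real t)" using Rt by simp
  also have "\<dots> = (real a + c * real a) * (real R ^ (2*l) * real t)" by (simp add: algebra_simps)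
  also have "\<dots> = real ((a + b') * (R^(2*l) * t))" using b unfolding b'_def a_def by simp
  finally have "R^(K+1+l) = (a + b') * (R^(2*l) * t)" by (simp only: of_nat_eq_iff)
  then show "(R^(K-l) + nat \<lfloor>c * real (R ^ (K - l))\<rfloor>) dvd R^(K+1+l)"
    unfolding a_def b'_def by simp
  have "2*K+1 = (K+1+l) + (K-l)" using lK by simp
  then have "R^(2*K+1) = R^(K+1+l) * R^(K-l)" by (metis power_add)
  then show "R^(K+1+l) dvd R^(2*K+1)" by (rule dvdI)
  show "gword c R K l = concat (replicate (R^(2*K+1) div R^(K+1+l))
           (blk1 (R^(K+1+l)) (R^(K-l)) (nat \<lfloor>c * real (R ^ (K - l))\<rfloor>)
          @ blk2 (R^(K+1+l)) (R^(K-l)) (nat \<lfloor>c * real (R ^ (K - l))\<rfloor>)))"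
    by (simp add: gword_def Let_def)
qed

lemma gword_len_nth:
  assumes "0 < a + b" "(a+b) dvd M" "M dvd L" "0 < M"
    and g: "g = concat (replicate (L div M) (blk1 M a b @ blk2 M a b))"
  shows "length g = 2 * L" and "\<And>p. p < 2 * L \<Longrightarrow> g ! p = lt M a b p"
proof -
  have n: "L div M * (2 * M) = 2 * L" using assms(3) by (simp add: mult.commute mult.left_commute)
  show "length g = 2 * L" unfolding g using assms(2) n
    by (simp add: length_concat_replicate length_blk1 length_blk2 mult_2)
  show "g ! p = lt M a b p" if "p < 2 * L" for p
    unfolding g by (rule gw_nth[OF assms(1,2)]) (use that n in simp)
qed




lemma pow_split_le:
  fixes R m n :: nat
  assumes "1 \<le> R" "0 < n"
  shows "R * R^m \<le> R^(m + n)"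
proof -
  have "R \<le> R^n" using assms by (rule self_le_power)
  then have "R * R^m \<le> R^n * R^m" by (rule mult_right_mono) simp
  then show ?thesis by (simp add: power_add mult.commute)
qed

theorem lemma3p8:
  fixes c :: real and K t R L i j :: nat and s :: "nat list \<times> nat list"
  assumes "0 \<le> c" and "c < sqrt 2 - 1"
    and "K \<ge> 1" and "t > 0"
    and "real R = (1 + c) * real t" and "R \<ge> 10"
    and "L = R ^ (2 * K + 1)"
    and "1 \<le> i" and "i < j" and "j \<le> K"
    and "c * real (R ^ (K - i)) \<in> \<int>" and "c * real (R ^ (K - j)) \<in> \<int>"
    and "common_subseq (gword c R K i) (gword c R K j) s"
  shows "(1 + 2 / real R) * real (span_pos (fst s)) + real (span_pos (snd s))
           \<ge> (3 + c) * real (cs_len s) - 10 * real L / real R"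
proof -
  note c0 = assms(1)
  obtain "is" js where s: "s = (is, js)" by (cases s)
  define gI where "gI = gword c R K i"
  define gJ where "gJ = gword c R K j"
  have cs: "sorted_wrt (<) is" "sorted_wrt (<) js" "length is = length js"
    "\<forall>p\<in>set is. p < length gI" "\<forall>q\<in>set js. q < length gJ"
    "map (\<lambda>p. gI ! p) is = map (\<lambda>q. gJ ! q) js"
    using assms(13) unfolding common_subseq_def Let_def s gI_def gJ_def by simp_all
  have c1': "c + 1 < sqrt 2" using assms(2) by simp
  have "(c + 1) ^ 2 < (sqrt 2) ^ 2" by (rule power_strict_mono[OF c1']) (use c0 in simp_all)
  then have sq: "(c + 1) ^ 2 < 2" by simp
  have cc: "c * (3 + c) \<le> 1 + c" using sq by (simp add: power2_eq_square algebra_simps)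
  have sq2: "c * c + 2 * c + 1 < 2" using sq by (simp add: power2_eq_square algebra_simps)
  have "0 \<le> c * c" using c0 by simp
  then have c1: "c \<le> 1" using sq2 c0 by linarith
  have iK: "i \<le> K" and jK: "j \<le> K" using assms(9,10) by simp_all
  note fI = gword_facts[OF c0 assms(5) assms(4) iK assms(11)]
  note fJ = gword_facts[OF c0 assms(5) assms(4) jK assms(12)]
  define aI where "aI = R^(K-i)"
  define bI where "bI = nat \<lfloor>c * real (R ^ (K - i))\<rfloor>"
  define MI where "MI = R^(K+1+i)"
  define aJ where "aJ = R^(K-j)"
  define bJ where "bJ = nat \<lfloor>c * real (R ^ (K - j))\<rfloor>"
  define MJ where "MJ = R^(K+1+j)"
  have R0: "0 < R" by (rule fI(4))
  have aI0: "0 < aI" and aJ0: "0 < aJ" and MI0: "0 < MI" and MJ0: "0 < MJ"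
    using R0 by (simp_all add: aI_def aJ_def MI_def MJ_def)
  have bI: "real bI = c * real aI" using fI(1) by (simp add: bI_def aI_def)
  have bJ: "real bJ = c * real aJ" using fJ(1) by (simp add: bJ_def aJ_def)
  have dI: "(aI + bI) dvd MI" using fI(2) by (simp add: aI_def bI_def MI_def)
  have dJ: "(aJ + bJ) dvd MJ" using fJ(2) by (simp add: aJ_def bJ_def MJ_def)
  have LI: "MI dvd L" using fI(3) assms(7) by (simp add: MI_def)
  have LJ: "MJ dvd L" using fJ(3) assms(7) by (simp add: MJ_def)
  have gIe: "gI = concat (replicate (L div MI) (blk1 MI aI bI @ blk2 MI aI bI))"
    using fI(5) assms(7) by (simp add: gI_def aI_def bI_def MI_def)
  have gJe: "gJ = concat (replicate (L div MJ) (blk1 MJ aJ bJ @ blk2 MJ aJ bJ))"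
    using fJ(5) assms(7) by (simp add: gJ_def aJ_def bJ_def MJ_def)
  note nI = gword_len_nth[OF _ dI LI MI0 gIe]
  note nJ = gword_len_nth[OF _ dJ LJ MJ0 gJe]
  have mI0: "0 < aI + bI" and mJ0: "0 < aJ + bJ" using aI0 aJ0 by simp_all
  have lenI: "length gI = 2 * L" by (rule nI(1)[OF mI0])
  have lenJ: "length gJ = 2 * L" by (rule nJ(1)[OF mJ0])
  have R1r: "1 \<le> R" using R0 by simp
  have R1: "R * aJ \<le> aI"
  proof -
    have e: "K - i = (K - j) + (j - i)" using assms(9,10) by simp
    have "R * R^(K-j) \<le> R^((K-j) + (j-i))" by (rule pow_split_le[OF R1r]) (use assms(9) in simp)
    then show ?thesis unfolding aI_def aJ_def e .
  qed
  have R2: "R * aJ \<le> MJ"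
  proof -
    have e: "K + 1 + j = (K - j) + (2*j+1)" using jK by simp
    have "R * R^(K-j) \<le> R^((K-j) + (2*j+1))" by (rule pow_split_le[OF R1r]) simp
    then show ?thesis unfolding MJ_def aJ_def e .
  qed
  have R3: "R * MI \<le> MJ"
  proof -
    have e: "K + 1 + j = (K + 1 + i) + (j - i)" using assms(9) by simp
    have "R * R^(K+1+i) \<le> R^((K+1+i) + (j-i))" by (rule pow_split_le[OF R1r]) (use assms(9) in simp)
    then show ?thesis unfolding MJ_def MI_def e .
  qed
  have Lr: "0 \<le> real L" by simp
  have Rp: "0 < real R" using R0 by simp
  show ?thesis
  proof (cases "is = []")
    case True
    then have "js = []" using cs(3) by simp
    then show ?thesis using True Lr Rp unfolding s by (simp add: span_pos_def cs_len_def)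
  next
    case False
    have neJ: "js \<noteq> []" using False cs(3) by auto
    have bI2: "\<forall>p\<in>set is. p < 2 * L" using cs(4) lenI by simp
    have bJ2: "\<forall>q\<in>set js. q < 2 * L" using cs(5) lenJ by simp
    have eq: "\<forall>k < length is. lt MI aI bI (is ! k) = lt MJ aJ bJ (js ! k)"
    proof (intro allI impI)
      fix k assume k: "k < length is"
      have "map (\<lambda>p. gI ! p) is ! k = map (\<lambda>q. gJ ! q) js ! k" using cs(6) by simp
      then have "gI ! (is ! k) = gJ ! (js ! k)" using k cs(3) by simp
      moreover have "is ! k < 2 * L" using bI2 k by simp
      moreover have "js ! k < 2 * L" using bJ2 k cs(3) by simp
      ultimately show "lt MI aI bI (is ! k) = lt MJ aJ bJ (js ! k)"
        using nI(2)[OF mI0] nJ(2)[OF mJ0] by simp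
    qed
    have main: "(3 + c) * real (length is) \<le> (real (last is) - real (hd is) + 1)
            + (real (last js) - real (hd js) + 1) + 8 * real L / real R"
      by (rule main_comb[OF c0 cc c1 bI bJ aI0 aJ0 MI0 MJ0 dI dJ LI LJ cs(1,2,3) False bI2 bJ2 eq
            R1 R2 R3 R0])
    have hlI: "hd is \<le> last is"
      using sorted_hd_le[where pos="\<lambda>x. x", of "is" "last is"] cs(1) False by simp
    have hlJ: "hd js \<le> last js"
      using sorted_hd_le[where pos="\<lambda>x. x", of js "last js"] cs(2) neJ by simp
    have spI: "real (span_pos is) = real (last is) - real (hd is) + 1"
      using False hlI by (simp add: span_pos_def of_nat_diff)
    have spJ: "real (span_pos js) = real (last js) - real (hd js) + 1"
      using neJ hlJ by (simp add: span_pos_def of_nat_diff)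
    have "0 \<le> 2 / real R * real (span_pos is)" using Rp by simp
    moreover have "8 * real L / real R \<le> 10 * real L / real R"
      using Rp Lr by (simp add: divide_right_mono)
    ultimately have h: "0 \<le> 2 / real R * real (span_pos is)" "8 * real L / real R \<le> 10 * real L / real R"
      by blast+
    have g: "(3 + c) * real (length is) \<le> real (span_pos is) + real (span_pos js) + 8 * real L / real R"
      using main spI spJ by linarith
    have ex: "(1 + 2 / real R) * real (span_pos is) = real (span_pos is) + 2 / real R * real (span_pos is)"
      by (simp add: distrib_right)
    show ?thesis unfolding s cs_len_def fst_conv snd_conv ex using g h by linarith
  qed
qed


end
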